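(* Let $m,n,k\in\mathbb{N}$, let $\varepsilon\geq 0$, and let $\mathbf{X}$ be a random matrix in $\mathbb{R}^{m\times n}$ with arbitrary distribution (continuous, discrete, discrete-continuous mixture, or singular). Let $\mathcal{S}\subseteq\mathbb{R}^{m\times n}$ be an $\varepsilon$-support set of $\mathbf{X}$ and suppose $k>\underline{\dim}_\mathrm{B}(\mathcal{S})$. Then for Lebesgue almost all $(\mathbf{A}_1,\dots,\mathbf{A}_k)\in(\mathbb{R}^{m\times n})^k$ there exists a measurable map (decoder) $g:\mathbb{R}^k\to\mathbb{R}^{m\times n}$ such that $$\Pr\Big[g\big((\langle \mathbf{A}_1,\mathbf{X}\rangle,\dots,\langle \mathbf{A}_k,\mathbf{X}\rangle)^{T}\big)\neq \mathbf{X}\Big]\leq\varepsilon.$$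
   Context: For $\mathbf{A},\mathbf{B}\in\mathbb{R}^{m\times n}$, $\langle \mathbf{A},\mathbf{B}\rangle=\operatorname{tr}(\mathbf{A}^T\mathbf{B})$ and $\|\mathbf{A}\|_2=\sqrt{\langle\mathbf{A},\mathbf{A}\rangle}$. For $\varepsilon\ge 0$, a nonempty bounded set $\mathcal{S}\subseteq\mathbb{R}^{m\times n}$ is called an $\varepsilon$-support set of the random matrix $\mathbf{X}$ if $\Pr[\mathbf{X}\in\mathcal{S}]\geq 1-\varepsilon$. For a nonempty bounded set $\mathcal{S}\subseteq\mathbb{R}^{m\times n}$, let $N_\mathcal{S}(\rho)$ be the minimal number of open $\|\cdot\|_2$-balls of radius $\rho$ (with centers in $\mathbb{R}^{m\times n}$) needed to cover $\mathcal{S}$; the lower Minkowski dimension is $\underline{\dim}_\mathrm{B}(\mathcal{S})=\liminf_{\rho\to0}\frac{\log N_\mathcal{S}(\rho)}{\log(1/\rho)}$. *)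

theory Defs
  imports "HOL-Probability.Probability"
begin

text \<open>Matrices in R^(m x n) are rendered as real^'n^'m. The library inner product on this
type is the Frobenius inner product tr(A^T B) = sum_i sum_j A_ij B_ij, and norm is the
Frobenius norm.\<close>

definition covering_number :: "'a::metric_space set \<Rightarrow> real \<Rightarrow> nat" where
  "covering_number S \<rho> =
     (LEAST N. \<exists>C. finite C \<and> card C = N \<and> S \<subseteq> (\<Union>c\<in>C. ball c \<rho>))"

definition lower_box_dim :: "'a::metric_space set \<Rightarrow> ereal" where
  "lower_box_dim S =
     Liminf (at_right 0) (\<lambda>\<rho>. ereal (ln (real (covering_number S \<rho>)) / ln (1 / \<rho>)))"

definition eps_support_set :: "'w measure \<Rightarrow> ('w \<Rightarrow> 'a::metric_space) \<Rightarrow> 'a set \<Rightarrow> real \<Rightarrow> bool" where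
  "eps_support_set M X S \<epsilon> \<longleftrightarrow>
     S \<noteq> {} \<and> bounded S \<and> measure M {\<omega> \<in> space M. X \<omega> \<in> S} \<ge> 1 - \<epsilon>"

end

theory Submission
  imports Defs
begin

lemma norm_vec_le_sum:
  fixes x :: "'a::real_normed_vector^'k"
  shows "norm x \<le> (\<Sum>i\<in>UNIV. norm (x$i))"
  unfolding norm_vec_def by (rule L2_set_le_sum) simp

lemma slab:
  fixes c :: "real^'n^'m" and p :: 'm and q :: 'n
  assumes eta: "0 < \<eta>" "\<eta> \<le> \<bar>c$p$q\<bar>" and t: "0 < t" "t \<le> \<eta>/6" and R: "0 \<le> R"
  shows "measure lebesgue {A::real^'n^'m^'k. norm A \<le> R \<and> (\<forall>i. \<bar>A$i \<bullet> c\<bar> \<le> t)}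
     \<le> measure lebesgue (cball (0::real^'n^'m^'k) (R + real CARD('k))) * (6*t/\<eta>)^CARD('k)"
proof -
  define F where "F = {A::real^'n^'m^'k. norm A \<le> R \<and> (\<forall>i. \<bar>A$i \<bullet> c\<bar> \<le> t)}"
  have Feq: "F = cball 0 R \<inter> (\<Inter>i. {A. \<bar>A$i \<bullet> c\<bar> \<le> t})"
    unfolding F_def by auto
  have "closed F" unfolding Feq
    by (intro closed_Int closed_INT closed_cball ballI closed_Collect_le continuous_intros)
  moreover have "bounded F" unfolding Feq by (meson bounded_Int bounded_cball)
  ultimately have cF: "compact F" by (simp add: compact_eq_bounded_closed)
  hence Fm: "F \<in> lmeasurable" by (rule lmeasurable_compact)
  define h where "h = 3*t/\<eta>"
  have h0: "0 < h" and h2: "h \<le> 1/2" using eta t by (auto simp: h_def field_simps)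
  define J where "J = nat \<lfloor>1/h\<rfloor>"
  have "1/h \<ge> 2" using h0 h2 by (simp add: field_simps)
  have J1: "real J \<ge> 1/h - 1" and J2: "real J \<le> 1/h" using \<open>1/h \<ge> 2\<close> unfolding J_def
    by linarith+
  have Jh: "real J * h \<le> 1" using J2 h0 by (simp add: field_simps)
  have Jpos: "real J \<ge> \<eta> / (6*t)"
  proof -
    have "1/h - 1 \<ge> 1/(2*h)" using \<open>1/h \<ge> 2\<close> h0 by (simp add: field_simps)
    thus ?thesis using J1 eta t by (simp add: h_def field_simps)
  qed
  have Jg0: "real J > 0" using Jpos eta t by (smt (verit) divide_pos_pos)
  define u :: "real^'n^'m" where "u = axis p (axis q 1)"
  have uc: "u \<bullet> c = c$p$q" unfolding u_def by (simp add: inner_axis')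
  have "norm u ^ 2 = 1" unfolding u_def power2_norm_eq_inner by (simp add: inner_axis_axis)
  hence nu: "norm u = 1" using norm_ge_zero[of u] by (smt (verit) power2_eq_1_iff)
  define v :: "('k \<Rightarrow> nat) \<Rightarrow> real^'n^'m^'k" where "v j = (\<chi> i. (real (j i) * h) *\<^sub>R u)" for j
  define G where "G = PiE (UNIV::'k set) (\<lambda>_. {..<J})"
  define T where "T j = (+) (v j) ` F" for j
  have fin: "finite G" unfolding G_def by (simp add: finite_PiE)
  have cardG: "card G = J ^ CARD('k)" unfolding G_def by (simp add: card_PiE)
  have Tm: "T j \<in> lmeasurable" for j unfolding T_def by (rule measurable_translation[OF Fm])
  have Tmeas: "measure lebesgue (T j) = measure lebesgue F" for j
    unfolding T_def by (rule measure_translation)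
  have disj: "disjoint_family_on T G"
  proof (unfold disjoint_family_on_def, intro ballI impI)
    fix j j' assume "j \<in> G" "j' \<in> G" "j \<noteq> j'"
    show "T j \<inter> T j' = {}"
    proof (rule ccontr)
      assume "T j \<inter> T j' \<noteq> {}"
      then obtain A A' where A: "A \<in> F" "A' \<in> F" and eq: "v j + A = v j' + A'"
        unfolding T_def by auto
      from \<open>j \<noteq> j'\<close> obtain i where ji: "j i \<noteq> j' i" by auto
      have "(v j + A)$i \<bullet> c = (v j' + A')$i \<bullet> c" using eq by simp
      hence "real (j i) * h * c$p$q + A$i \<bullet> c = real (j' i) * h * c$p$q + A'$i \<bullet> c"
        by (simp add: v_def inner_add_left uc)
      hence "(real (j i) - real (j' i)) * h * c$p$q = A'$i \<bullet> c - A$i \<bullet> c"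
        by (simp add: algebra_simps)
      moreover have "\<bar>A'$i \<bullet> c - A$i \<bullet> c\<bar> \<le> 2*t"
      proof -
        have "\<bar>A'$i \<bullet> c\<bar> \<le> t" "\<bar>A$i \<bullet> c\<bar> \<le> t" using A unfolding F_def by auto
        thus ?thesis by linarith
      qed
      moreover have "\<bar>(real (j i) - real (j' i)) * h * c$p$q\<bar> \<ge> 1 * h * \<eta>"
      proof -
        have "\<bar>real (j i) - real (j' i)\<bar> \<ge> 1" using ji by linarith
        thus ?thesis unfolding abs_mult using h0 eta
          by (intro mult_mono) auto
      qed
      moreover have "h * \<eta> = 3*t" using eta by (simp add: h_def)
      ultimately show False using t by linarith
    qed
  qed
  have sub: "(\<Union>j\<in>G. T j) \<subseteq> cball 0 (R + real CARD('k))"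
  proof safe
    fix j B assume jG: "j \<in> G" and "B \<in> T j"
    then obtain A where A: "A \<in> F" and B: "B = v j + A" unfolding T_def by auto
    have "norm (v j) \<le> (\<Sum>i\<in>UNIV. norm (v j $ i))" by (rule norm_vec_le_sum)
    also have "\<dots> \<le> (\<Sum>i\<in>(UNIV::'k set). 1)"
    proof (rule sum_mono)
      fix i
      have "j i < J" using jG unfolding G_def by auto
      hence "real (j i) * h \<le> real J * h" using h0 by simp
      hence "real (j i) * h \<le> 1" using Jh by linarith
      thus "norm (v j $ i) \<le> 1" using h0 by (simp add: v_def nu)
    qed
    also have "\<dots> = real CARD('k)" by simp
    finally have "norm (v j) \<le> real CARD('k)" .
    moreover have "norm A \<le> R" using A unfolding F_def by simp
    ultimately show "B \<in> cball 0 (R + real CARD('k))" unfolding B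
      using norm_triangle_ineq[of "v j" A] by simp
  qed
  have "real (J ^ CARD('k)) * measure lebesgue F = (\<Sum>j\<in>G. measure lebesgue (T j))"
    by (simp add: Tmeas cardG)
  also have "\<dots> = measure lebesgue (\<Union>j\<in>G. T j)"
    by (rule measure_finite_Union[symmetric]) (use fin disj Tm fmeasurableD2[OF Tm] in \<open>auto simp del: emeasure_completion\<close>)
  also have "\<dots> \<le> measure lebesgue (cball (0::real^'n^'m^'k) (R + real CARD('k)))"
    by (rule measure_mono_fmeasurable[OF sub]) (use fin Tm in auto)
  finally have main: "real J ^ CARD('k) * measure lebesgue F \<le> measure lebesgue (cball (0::real^'n^'m^'k) (R + real CARD('k)))"
    by simp
  have "measure lebesgue F = (real J ^ CARD('k) * measure lebesgue F) * (1/real J)^CARD('k)"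
    using Jg0 by (simp add: power_one_over field_simps)
  also have "\<dots> \<le> measure lebesgue (cball (0::real^'n^'m^'k) (R + real CARD('k))) * (6*t/\<eta>)^CARD('k)"
  proof (rule mult_mono[OF main])
    have "1/real J \<le> 6*t/\<eta>" using Jpos Jg0 eta t by (simp add: field_simps)
    thus "(1/real J)^CARD('k) \<le> (6*t/\<eta>)^CARD('k)" using Jg0 by (intro power_mono) auto
  qed (auto)
  finally show ?thesis unfolding F_def .
qed


lemma big_coord:
  fixes w :: "real^'n^'m"
  assumes "norm w \<ge> e" "e > 0"
  shows "\<exists>p q. \<bar>w$p$q\<bar> \<ge> e / (real CARD('m) * real CARD('n))"
proof (rule ccontr)
  define d where "d = real CARD('m) * real CARD('n)"
  have d0: "d > 0" unfolding d_def by simp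
  assume "\<not> ?thesis"
  hence lt: "\<bar>w$p$q\<bar> < e / d" for p q unfolding d_def by (meson not_le)
  have "norm w \<le> (\<Sum>p\<in>UNIV. norm (w$p))" by (rule norm_vec_le_sum)
  also have "\<dots> \<le> (\<Sum>p\<in>UNIV. \<Sum>q\<in>UNIV. \<bar>w$p$q\<bar>)"
    by (intro sum_mono norm_le_l1_cart)
  also have "\<dots> < (\<Sum>p\<in>(UNIV::'m set). \<Sum>q\<in>(UNIV::'n set). e / d)"
    by (intro sum_strict_mono lt) auto
  also have "\<dots> = e" using d0 unfolding d_def by simp
  finally show False using assms by simp
qed

definition Eset :: "real \<Rightarrow> (real^'n^'m) set \<Rightarrow> ((real^'n^'m^'k) \<times> (real^'n^'m)) set" where
  "Eset \<delta> K = {(A,x). x \<in> K \<and> (\<exists>y\<in>K. dist y x \<ge> \<delta> \<and> (\<forall>i. A$i \<bullet> y = A$i \<bullet> x))}"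

lemma closed_Eset:
  fixes K :: "(real^'n^'m) set"
  assumes "compact K"
  shows "closed (Eset \<delta> K :: ((real^'n^'m^'k) \<times> (real^'n^'m)) set)"
proof -
  define T where "T = {(y::real^'n^'m, (A::real^'n^'m^'k, x::real^'n^'m)). x \<in> K \<and> dist y x \<ge> \<delta> \<and> (\<forall>i. A$i \<bullet> y = A$i \<bullet> x)}"
  have T: "T = (snd \<circ> snd) -` K \<inter> {z. dist (fst z) (snd (snd z)) \<ge> \<delta>} \<inter>
     (\<Inter>i. {z. (fst (snd z))$i \<bullet> fst z = (fst (snd z))$i \<bullet> snd (snd z)})"
    unfolding T_def by auto
  have "closed T" unfolding T
    by (intro closed_Int closed_INT ballI closed_Collect_le closed_Collect_eq continuous_intros
        closed_vimage compact_imp_closed[OF assms])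
  hence "closed {z. \<exists>y. y \<in> K \<and> (y, z) \<in> T}"
    by (rule closed_compact_projection[OF assms])
  moreover have "{z. \<exists>y. y \<in> K \<and> (y, z) \<in> T} = Eset \<delta> K"
    unfolding T_def Eset_def by auto
  ultimately show ?thesis by simp
qed

lemma cover_exists:
  fixes S :: "'a::euclidean_space set"
  assumes "bounded S" "\<rho> > 0"
  shows "\<exists>C. finite C \<and> card C = covering_number S \<rho> \<and> S \<subseteq> (\<Union>c\<in>C. ball c \<rho>)"
proof -
  have "compact (closure S)" using assms by (simp add: compact_closure)
  then obtain C where "finite C" "closure S \<subseteq> (\<Union>c\<in>C. ball c \<rho>)"
    unfolding compact_eq_totally_bounded using assms by blast
  hence ex: "\<exists>N C. finite C \<and> card C = N \<and> S \<subseteq> (\<Union>c\<in>C. ball c \<rho>)"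
    using closure_subset by blast
  show ?thesis unfolding covering_number_def by (rule LeastI_ex[OF ex])
qed

lemma core_null:
  fixes S :: "(real^'n^'m) set" and x :: "real^'n^'m"
  assumes bS: "bounded S"
    and sK: "s < real CARD('k)"
    and freq: "\<forall>d>0. \<exists>\<rho>. 0 < \<rho> \<and> \<rho> < d \<and> real (covering_number S \<rho>) \<le> (1/\<rho>) powr s"
    and \<delta>: "\<delta> > 0" and R: "R \<ge> 0"
  shows "measure lebesgue {A::real^'n^'m^'k. norm A \<le> R \<and> (A,x) \<in> Eset \<delta> (closure S)} = 0"
proof -
  define Z where "Z = {A::real^'n^'m^'k. norm A \<le> R \<and> (A,x) \<in> Eset \<delta> (closure S)}"
  have cK: "compact (closure S)" using bS by (simp add: compact_closure)
  have "Z = cball 0 R \<inter> (\<lambda>A. (A,x)) -` Eset \<delta> (closure S)" unfolding Z_def by auto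
  hence "closed Z" using closed_Eset[OF cK, of \<delta>]
    by (auto intro!: closed_Int closed_vimage continuous_intros)
  moreover have "bounded Z" unfolding Z_def by (auto simp: bounded_iff)
  ultimately have Zm: "Z \<in> lmeasurable" by (simp add: compact_eq_bounded_closed lmeasurable_compact)
  define d where "d = real CARD('m) * real CARD('n)"
  have d0: "d > 0" unfolding d_def by simp
  define Kk where "Kk = CARD('k)"
  define M where "M = measure lebesgue (cball (0::real^'n^'m^'k) (R + real Kk))"
  have M0: "M \<ge> 0" unfolding M_def by simp
  define B where "B = M * (24 * d * (R+1) / \<delta>) ^ Kk"
  have B0: "B \<ge> 0" unfolding B_def using M0 d0 R \<delta> by simp
  define a where "a = real Kk - s"
  have a0: "a > 0" using sK unfolding a_def Kk_def by simp
  have "measure lebesgue Z \<le> e" if e: "e > 0" for e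
  proof -
    define d1 where "d1 = min (\<delta>/4) (min (\<delta>/(48*d*(R+1))) (min 1 ((e/(B+1)) powr (1/a))))"
    have d1p: "d1 > 0" unfolding d1_def using \<delta> d0 R e B0 by auto
    obtain \<rho> where \<rho>: "0 < \<rho>" "\<rho> < d1" and N: "real (covering_number S \<rho>) \<le> (1/\<rho>) powr s"
      using freq d1p by blast
    obtain C where C: "finite C" "card C = covering_number S \<rho>" "S \<subseteq> (\<Union>c\<in>C. ball c \<rho>)"
      using cover_exists[OF bS \<rho>(1)] by blast
    define t where "t = 2*(R+1)*\<rho>"
    define \<eta> where "\<eta> = \<delta>/(2*d)"
    define F where "F w = {A::real^'n^'m^'k. norm A \<le> R \<and> (\<forall>i. \<bar>A$i \<bullet> w\<bar> \<le> t)}" for w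
    define C' where "C' = {c\<in>C. norm (c - x) \<ge> \<delta>/2}"
    have fC': "finite C'" using C(1) unfolding C'_def by simp
    have "card C' \<le> card C" using C(1) unfolding C'_def by (intro card_mono) auto
    have t0: "t > 0" using \<rho> R unfolding t_def by simp
    have \<eta>0: "\<eta> > 0" using \<delta> d0 unfolding \<eta>_def by simp
    have t\<eta>: "t \<le> \<eta>/6"
    proof -
      have "\<rho> \<le> \<delta>/(48*d*(R+1))" using \<rho> unfolding d1_def by simp
      moreover have "48*d*(R+1) > 0" using d0 R by simp
      ultimately have "\<rho> * (48*d*(R+1)) \<le> \<delta>" by (simp add: pos_le_divide_eq)
      moreover have "\<rho> * (24*d*(R+1)) \<le> \<rho> * (48*d*(R+1))"
        using \<rho>(1) d0 R by (intro mult_left_mono) auto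
      ultimately have "\<rho> * (24*d*(R+1)) \<le> \<delta>" by linarith
      thus ?thesis unfolding t_def \<eta>_def using d0 R \<rho> by (simp add: field_simps)
    qed
    have Fm: "F w \<in> lmeasurable" for w
    proof -
      have Feq: "F w = cball 0 R \<inter> (\<Inter>i. {A. \<bar>A$i \<bullet> w\<bar> \<le> t})"
        unfolding F_def by auto
      have "closed (F w)" unfolding Feq
        by (intro closed_Int closed_INT closed_cball ballI closed_Collect_le continuous_intros)
      moreover have "bounded (F w)" unfolding Feq by (meson bounded_Int bounded_cball)
      ultimately show ?thesis by (simp add: compact_eq_bounded_closed lmeasurable_compact)
    qed
    have Fb: "measure lebesgue (F (c - x)) \<le> M * (6*t/\<eta>)^Kk" if "c \<in> C'" for c
    proof -
      have "norm (c - x) \<ge> \<delta>/2" using that unfolding C'_def by simp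
      then obtain p q where pq: "\<bar>(c-x)$p$q\<bar> \<ge> (\<delta>/2) / (real CARD('m) * real CARD('n))"
        using big_coord[of "\<delta>/2" "c - x"] \<delta> by auto
      hence "\<eta> \<le> \<bar>(c-x)$p$q\<bar>" unfolding \<eta>_def d_def by simp
      from slab[OF \<eta>0 this t0 t\<eta> R] show ?thesis unfolding F_def M_def Kk_def by simp
    qed
    have sub: "Z \<subseteq> (\<Union>c\<in>C'. F (c - x))"
    proof
      fix A assume "A \<in> Z"
      then obtain y where A: "norm A \<le> R" "x \<in> closure S" and y: "y \<in> closure S" "dist y x \<ge> \<delta>"
         and eq: "\<forall>i. A$i \<bullet> y = A$i \<bullet> x"
        unfolding Z_def Eset_def by auto
      obtain s' where s': "s' \<in> S" "dist s' y < \<rho>" using y(1) \<rho>(1) closure_approachable by metis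
      then obtain c where c: "c \<in> C" "dist c s' < \<rho>" using C(3) by (auto simp: dist_commute)
      have cy: "dist c y < 2*\<rho>" using c s' dist_triangle[of c y s'] by simp
      have "\<rho> \<le> \<delta>/4" using \<rho> unfolding d1_def by simp
      have "norm (c - x) \<ge> \<delta>/2"
        using cy y(2) \<open>\<rho> \<le> \<delta>/4\<close> dist_triangle[of y x c] norm_minus_commute[of c y]
        by (simp add: dist_norm dist_commute)
      hence "c \<in> C'" unfolding C'_def using c by simp
      moreover have "A \<in> F (c - x)" unfolding F_def
      proof (intro CollectI conjI allI A(1))
        fix i
        have "A$i \<bullet> (c - x) = A$i \<bullet> (c - y)" using eq[rule_format, of i] by (simp add: inner_diff_right)
        also have "\<bar>\<dots>\<bar> \<le> norm (A$i) * norm (c - y)" by (rule Cauchy_Schwarz_ineq2)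
        also have "\<dots> \<le> R * (2*\<rho>)"
          using Finite_Cartesian_Product.norm_nth_le[of A i] A(1) cy R by (intro mult_mono) (auto simp: dist_norm)
        also have "\<dots> \<le> t" unfolding t_def using R \<rho> by simp
        finally show "\<bar>A$i \<bullet> (c - x)\<bar> \<le> t" .
      qed
      ultimately show "A \<in> (\<Union>c\<in>C'. F (c - x))" by blast
    qed
    have "measure lebesgue Z \<le> measure lebesgue (\<Union>c\<in>C'. F (c - x))"
      by (rule measure_mono_fmeasurable[OF sub]) (use Zm fC' Fm in auto)
    also have "\<dots> \<le> (\<Sum>c\<in>C'. measure lebesgue (F (c - x)))"
      by (rule measure_UNION_le[OF fC']) (use Fm in auto)
    also have "\<dots> \<le> (\<Sum>c\<in>C'. M * (6*t/\<eta>)^Kk)" by (rule sum_mono) (rule Fb)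
    also have "\<dots> = real (card C') * (M * (6*t/\<eta>)^Kk)" by simp
    also have "\<dots> \<le> real (card C) * (M * (6*t/\<eta>)^Kk)"
      using \<open>card C' \<le> card C\<close> M0 t0 \<eta>0 by (intro mult_right_mono) auto
    also have "6*t/\<eta> = (24 * d * (R+1) / \<delta>) * \<rho>"
      unfolding t_def \<eta>_def using d0 \<delta> by (simp add: field_simps)
    also have "real (card C) * (M * ((24 * d * (R+1) / \<delta>) * \<rho>)^Kk) = B * (real (card C) * \<rho>^Kk)"
      unfolding B_def by (simp only: power_mult_distrib mult_ac)
    also have "\<dots> \<le> B * ((1/\<rho>) powr s * \<rho> powr real Kk)"
      using N C(2) B0 \<rho> by (intro mult_left_mono mult_right_mono) (auto simp: powr_realpow)
    also have "(1/\<rho>) powr s * \<rho> powr real Kk = \<rho> powr a"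
      using \<rho> unfolding a_def by (simp add: powr_divide powr_diff)
    also have "B * \<rho> powr a \<le> B * (e/(B+1))"
    proof (rule mult_left_mono[OF _ B0])
      have "\<rho> < (e/(B+1)) powr (1/a)" using \<rho> unfolding d1_def by simp
      hence "\<rho> powr a \<le> ((e/(B+1)) powr (1/a)) powr a"
        using \<rho> a0 by (intro powr_mono2) auto
      also have "\<dots> = e/(B+1)" using a0 e B0 by (simp add: powr_powr)
      finally show "\<rho> powr a \<le> e/(B+1)" .
    qed
    also have "\<dots> \<le> e" using B0 e by (simp add: field_simps)
    finally show ?thesis .
  qed
  hence "measure lebesgue Z \<le> 0"
    by (metis dense_le_bounded linorder_not_less order_refl)
  thus ?thesis unfolding Z_def by (simp add: measure_nonneg antisym)
qed


lemma vec_borel_measurable: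
  fixes f :: "'x \<Rightarrow> 'a::euclidean_space^'k"
  assumes "\<And>i. (\<lambda>x. f x $ i) \<in> borel_measurable M"
  shows "f \<in> borel_measurable M"
proof (subst borel_measurable_euclidean_space, intro ballI)
  fix b :: "'a^'k" assume "b \<in> Basis"
  then obtain i u where b: "b = axis i u" "u \<in> Basis" unfolding Basis_vec_def by auto
  have "(\<lambda>x. f x $ i \<bullet> u) \<in> borel_measurable M" using assms[of i] by measurable
  thus "(\<lambda>x. f x \<bullet> b) \<in> borel_measurable M" unfolding b by (simp add: inner_axis)
qed

lemma decoder:
  fixes K :: "(real^'n^'m) set" and A :: "real^'n^'m^'k"
  assumes cK: "compact K"
  shows "\<exists>g :: real^'k \<Rightarrow> real^'n^'m. g \<in> borel_measurable borel \<and>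
     (\<forall>x\<in>K. (\<forall>y\<in>K. (\<forall>i. A$i \<bullet> y = A$i \<bullet> x) \<longrightarrow> y = x) \<longrightarrow> g (\<chi> i. A$i \<bullet> x) = x)"
proof -
  define L where "L x = (\<chi> i. A$i \<bullet> x)" for x :: "real^'n^'m"
  have contL: "continuous_on UNIV L" unfolding L_def
    by (intro continuous_on_vec_lambda continuous_intros)
  define fib where "fib z = {x\<in>K. L x = z}" for z
  define h where "h p q z = (if z \<in> L ` K then Inf ((\<lambda>x. x$p$q) ` fib z) else 0)" for p q z
  define g where "g z = (\<chi> p q. h p q z)" for z
  have cLK: "compact (L ` K)" using compact_continuous_image[OF continuous_on_subset[OF contL] cK] by simp
  have cfib: "compact ((\<lambda>x. x$p$q) ` fib z)" for p q z
  proof -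
    have "fib z = K \<inter> L -` {z}" unfolding fib_def by auto
    moreover have "closed (L -` {z})" using contL
      by (intro continuous_closed_vimage) (auto simp: continuous_on_eq_continuous_at)
    ultimately have "compact (fib z)" using cK by (simp add: compact_Int_closed)
    thus ?thesis by (intro compact_continuous_image continuous_intros)
  qed
  have hle: "h p q z \<le> a \<longleftrightarrow> (z \<in> L ` (K \<inter> {x. x$p$q \<le> a})) \<or> (z \<notin> L ` K \<and> 0 \<le> a)" for p q z a
  proof (cases "z \<in> L ` K")
    case True
    hence ne: "(\<lambda>x. x$p$q) ` fib z \<noteq> {}" unfolding fib_def by auto
    have "Inf ((\<lambda>x. x$p$q) ` fib z) \<in> (\<lambda>x. x$p$q) ` fib z"
      using cfib[of p q z] ne by (intro closed_contains_Inf compact_imp_closed) (auto intro: compact_imp_bounded bounded_imp_bdd_below)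
    moreover have "Inf ((\<lambda>x. x$p$q) ` fib z) \<le> y$p$q" if "y \<in> fib z" for y
      using cfib[of p q z] that by (intro cInf_lower) (auto intro: compact_imp_bounded bounded_imp_bdd_below)
    ultimately obtain x0 where x0: "x0 \<in> fib z" "Inf ((\<lambda>x. x$p$q) ` fib z) = x0$p$q"
      and lw: "\<And>y. y \<in> fib z \<Longrightarrow> x0$p$q \<le> y$p$q" by force
    have hz: "h p q z = x0$p$q" using True x0 unfolding h_def by simp
    show ?thesis
    proof
      assume "h p q z \<le> a"
      thus "(z \<in> L ` (K \<inter> {x. x$p$q \<le> a})) \<or> (z \<notin> L ` K \<and> 0 \<le> a)"
        using x0(1) hz unfolding fib_def by auto
    next
      assume "(z \<in> L ` (K \<inter> {x. x$p$q \<le> a})) \<or> (z \<notin> L ` K \<and> 0 \<le> a)"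
      with True obtain y where "y \<in> fib z" "y$p$q \<le> a" unfolding fib_def by auto
      thus "h p q z \<le> a" using lw hz by force
    qed
  qed (auto simp: h_def)
  have hm: "h p q \<in> borel_measurable borel" for p q
  proof (subst borel_measurable_iff_le, intro allI)
    fix a
    have "{w \<in> space borel. h p q w \<le> a} = L ` (K \<inter> {x. x$p$q \<le> a}) \<union> (- (L ` K) \<inter> {z. 0 \<le> a})"
      using hle by auto
    moreover have "compact (L ` (K \<inter> {x. x$p$q \<le> a}))"
      by (intro compact_continuous_image continuous_on_subset[OF contL] compact_Int_closed cK
          closed_Collect_le continuous_intros) auto
    moreover have "open (- (L ` K))" using cLK by (simp add: compact_imp_closed open_Compl)
    ultimately show "{w \<in> space borel. h p q w \<le> a} \<in> sets borel"
    proof -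
      assume eq: "{w \<in> space borel. h p q w \<le> a} = L ` (K \<inter> {x. x$p$q \<le> a}) \<union> (- (L ` K) \<inter> {z. 0 \<le> a})"
        and c1: "compact (L ` (K \<inter> {x. x$p$q \<le> a}))" and o1: "open (- (L ` K))"
      have s1: "L ` (K \<inter> {x. x$p$q \<le> a}) \<in> sets borel"
        by (rule borel_closed[OF compact_imp_closed[OF c1]])
      have s2: "- (L ` K) \<inter> {z. 0 \<le> a} \<in> sets borel"
        by (cases "0 \<le> a") (use borel_open[OF o1] in auto)
      show ?thesis unfolding eq using s1 s2 by (rule sets.Un)
    qed
  qed
  have gm: "g \<in> borel_measurable borel"
    unfolding g_def by (intro vec_borel_measurable) (simp add: hm)
  have "g (\<chi> i. A$i \<bullet> x) = x" if x: "x \<in> K" and uniq: "\<forall>y\<in>K. (\<forall>i. A$i \<bullet> y = A$i \<bullet> x) \<longrightarrow> y = x" for x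
  proof -
    have "fib (L x) = {x}" using x uniq unfolding fib_def L_def by (auto simp: vec_eq_iff)
    moreover have "L x \<in> L ` K" using x by auto
    ultimately have "h p q (L x) = x$p$q" for p q unfolding h_def by simp
    thus ?thesis unfolding g_def L_def[symmetric] by (simp add: vec_eq_iff)
  qed
  with gm show ?thesis by blast
qed


lemma freq_from_dim:
  fixes S :: "'a::euclidean_space set"
  assumes "lower_box_dim S < ereal r"
  shows "\<exists>s. s < r \<and> (\<forall>d>0. \<exists>\<rho>. 0 < \<rho> \<and> \<rho> < d \<and> real (covering_number S \<rho>) \<le> (1/\<rho>) powr s)"
proof -
  obtain s where s: "lower_box_dim S < ereal s" "ereal s < ereal r" using ereal_dense2[OF assms] by blast
  define f where "f \<rho> = ereal (ln (real (covering_number S \<rho>)) / ln (1 / \<rho>))" for \<rho> :: real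
  have "\<not> ereal s \<le> Liminf (at_right 0) f" using s(1) unfolding lower_box_dim_def f_def by simp
  then obtain y where y: "y < ereal s" "\<not> eventually (\<lambda>\<rho>. y < f \<rho>) (at_right 0)"
    unfolding le_Liminf_iff by blast
  have "\<exists>\<rho>. 0 < \<rho> \<and> \<rho> < d \<and> real (covering_number S \<rho>) \<le> (1/\<rho>) powr s" if d: "d > 0" for d
  proof -
    from y(2) have "\<not> (\<forall>\<rho>>0. \<rho> < min d 1 \<longrightarrow> y < f \<rho>)"
      unfolding eventually_at_right_field using d by (metis min_less_iff_conj zero_less_one)
    then obtain \<rho> where \<rho>: "0 < \<rho>" "\<rho> < min d 1" "\<not> y < f \<rho>" by blast
    have "f \<rho> < ereal s" using \<rho>(3) y(1) by (meson less_le_trans not_less)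
    hence lt: "ln (real (covering_number S \<rho>)) / ln (1 / \<rho>) < s" unfolding f_def by simp
    have l0: "ln (1/\<rho>) > 0" using \<rho> by (simp add: ln_div)
    show ?thesis
    proof (cases "covering_number S \<rho> = 0")
      case True thus ?thesis using \<rho> by auto
    next
      case False
      hence N0: "real (covering_number S \<rho>) > 0" by simp
      have "ln (real (covering_number S \<rho>)) < s * ln (1/\<rho>)" using lt l0 by (simp add: divide_less_eq)
      hence "real (covering_number S \<rho>) < exp (s * ln (1/\<rho>))"
        using N0 by (metis exp_less_mono exp_ln)
      moreover have "(1/\<rho>) powr s = exp (s * ln (1/\<rho>))" using \<rho> by (simp add: powr_def)
      ultimately show ?thesis using \<rho> by (intro exI[of _ \<rho>]) simp
    qed
  qed
  thus ?thesis using s(2) by auto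
qed

theorem theorem1:
  fixes M :: "'w measure"
    and X :: "'w \<Rightarrow> real^'n^'m"
    and S :: "(real^'n^'m) set"
    and \<epsilon> :: real
  assumes "prob_space M"
    and "X \<in> borel_measurable M"
    and "\<epsilon> \<ge> 0"
    and "eps_support_set M X S \<epsilon>"
    and "ereal (real CARD('k::finite)) > lower_box_dim S"
  shows "AE A in (lborel :: (real^'n^'m^'k) measure).
           \<exists>g :: real^'k \<Rightarrow> real^'n^'m. g \<in> borel_measurable borel \<and>
             measure M {\<omega> \<in> space M. g (\<chi> i. A $ i \<bullet> X \<omega>) \<noteq> X \<omega>} \<le> \<epsilon>"
proof -
  interpret P: prob_space M by fact
  have Xm[measurable]: "X \<in> borel_measurable M" by fact
  have bS: "bounded S" and PS: "measure M {\<omega> \<in> space M. X \<omega> \<in> S} \<ge> 1 - \<epsilon>"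
    using assms(4) unfolding eps_support_set_def by auto
  define K where "K = closure S"
  have cK: "compact K" unfolding K_def using bS by (simp add: compact_closure)
  have Kb[measurable]: "K \<in> sets borel" using cK by (simp add: borel_closed compact_imp_closed)
  have PK: "measure M {\<omega> \<in> space M. X \<omega> \<in> K} \<ge> 1 - \<epsilon>"
  proof (cases "{\<omega> \<in> space M. X \<omega> \<in> S} \<in> sets M")
    case True
    have SK: "S \<subseteq> K" unfolding K_def by (rule closure_subset)
    have "{\<omega> \<in> space M. X \<omega> \<in> K} \<in> sets M" by measurable
    hence "measure M {\<omega> \<in> space M. X \<omega> \<in> S} \<le> measure M {\<omega> \<in> space M. X \<omega> \<in> K}"
      using SK by (intro P.finite_measure_mono) auto
    thus ?thesis using PS by simp
  next
    case False
    hence "measure M {\<omega> \<in> space M. X \<omega> \<in> S} = 0" by (rule measure_notin_sets)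
    thus ?thesis using PS measure_nonneg[of M "{\<omega> \<in> space M. X \<omega> \<in> K}"] by linarith
  qed
  obtain s where sK: "s < real CARD('k)"
    and freq: "\<forall>d>0. \<exists>\<rho>. 0 < \<rho> \<and> \<rho> < d \<and> real (covering_number S \<rho>) \<le> (1/\<rho>) powr s"
    using freq_from_dim[OF assms(5)] by blast
  define E :: "((real^'n^'m^'k) \<times> (real^'n^'m)) set" where "E = (\<Union>n. Eset (1 / Suc n) K)"
  have Eb[measurable]: "E \<in> sets borel"
  proof -
    have "Eset (1 / Suc n) K \<in> sets borel" for n using closed_Eset[OF cK] by (rule borel_closed)
    hence "range (\<lambda>n. Eset (1 / Suc n) K :: ((real^'n^'m^'k) \<times> (real^'n^'m)) set) \<subseteq> sets borel" by auto
    thus ?thesis unfolding E_def by (rule sets.countable_UN)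
  qed
  have step1: "AE A in (lborel :: (real^'n^'m^'k) measure). (A, x) \<notin> E" for x
  proof -
    have ae1: "AE A in (lborel :: (real^'n^'m^'k) measure). norm A \<le> real R \<longrightarrow> (A, x) \<notin> Eset (1 / Suc n) K" for n R
    proof -
      define Z where "Z = {A::real^'n^'m^'k. norm A \<le> real R \<and> (A,x) \<in> Eset (1 / Suc n) (closure S)}"
      have "Z = cball 0 (real R) \<inter> (\<lambda>A. (A,x)) -` Eset (1 / Suc n) (closure S)" unfolding Z_def by auto
      hence "closed Z" using closed_Eset[OF cK[unfolded K_def], of "1 / Suc n"]
        by (auto intro!: closed_Int closed_vimage continuous_intros)
      moreover have "bounded Z" unfolding Z_def by (auto simp: bounded_iff)
      ultimately have cZ: "compact Z" by (simp add: compact_eq_bounded_closed)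
      have Zs: "Z \<in> sets lborel" using cZ by (simp add: borel_closed compact_imp_closed)
      have "measure lebesgue Z = 0" unfolding Z_def
        by (rule core_null[OF bS sK freq]) auto
      hence "measure lborel Z = 0" using Zs by simp
      hence "emeasure lborel Z = 0" using emeasure_eq_measure2[OF fmeasurable_compact[OF cZ]] by simp
      hence "Z \<in> null_sets lborel" using Zs by auto
      thus ?thesis by (rule AE_I') (auto simp: Z_def K_def)
    qed
    hence "AE A in (lborel :: (real^'n^'m^'k) measure). \<forall>n R. norm A \<le> real R \<longrightarrow> (A, x) \<notin> Eset (1 / Suc n) K"
      by (intro iffD2[OF AE_all_countable] allI) (rule ae1)
    thus ?thesis
    proof (rule AE_mp, intro AE_I2 impI)
      fix A :: "real^'n^'m^'k" assume H: "\<forall>n R. norm A \<le> real R \<longrightarrow> (A, x) \<notin> Eset (1 / Suc n) K"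
      obtain R :: nat where "norm A \<le> real R" using real_arch_simple by blast
      thus "(A, x) \<notin> E" using H unfolding E_def by auto
    qed
  qed
  interpret PS: pair_sigma_finite M "lborel :: (real^'n^'m^'k) measure"
    by (simp add: pair_sigma_finite_def lborel.sigma_finite_measure_axioms P.sigma_finite_measure_axioms)
  have meas: "{z \<in> space (M \<Otimes>\<^sub>M (lborel :: (real^'n^'m^'k) measure)). (snd z, X (fst z)) \<notin> E}
      \<in> sets (M \<Otimes>\<^sub>M (lborel :: (real^'n^'m^'k) measure))"
  proof -
    have "(\<lambda>z. (snd z, X (fst z))) \<in> measurable (M \<Otimes>\<^sub>M (lborel :: (real^'n^'m^'k) measure)) (borel \<Otimes>\<^sub>M borel)"
      by measurable
    hence "(\<lambda>z. (snd z, X (fst z))) \<in> measurable (M \<Otimes>\<^sub>M (lborel :: (real^'n^'m^'k) measure)) borel"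
      by (simp add: borel_prod)
    thus ?thesis by measurable
  qed
  have "AE \<omega> in M. AE A in (lborel :: (real^'n^'m^'k) measure). (A, X \<omega>) \<notin> E"
    using step1 by simp
  hence AEA: "AE A in (lborel :: (real^'n^'m^'k) measure). AE \<omega> in M. (A, X \<omega>) \<notin> E"
    using PS.AE_commute[OF meas] by simp
  show ?thesis
  proof (rule AE_mp[OF AEA], intro AE_I2 impI)
    fix A :: "real^'n^'m^'k"
    assume AEw: "AE \<omega> in M. (A, X \<omega>) \<notin> E"
    obtain g :: "real^'k \<Rightarrow> real^'n^'m" where gm: "g \<in> borel_measurable borel"
      and gx: "\<And>x. x \<in> K \<Longrightarrow> (\<forall>y\<in>K. (\<forall>i. A$i \<bullet> y = A$i \<bullet> x) \<longrightarrow> y = x) \<Longrightarrow> g (\<chi> i. A$i \<bullet> x) = x"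
      using decoder[OF cK, of A] by blast
    obtain N where N: "N \<in> null_sets M" "\<And>\<omega>. \<omega> \<in> space M - N \<Longrightarrow> (A, X \<omega>) \<notin> E"
      using AEw by (rule AE_E3) blast
    define Bad where "Bad = {\<omega> \<in> space M. g (\<chi> i. A $ i \<bullet> X \<omega>) \<noteq> X \<omega>}"
    define Out where "Out = {\<omega> \<in> space M. X \<omega> \<notin> K}"
    have Outm: "Out \<in> sets M" unfolding Out_def by measurable
    have Bsub: "Bad \<subseteq> Out \<union> N"
    proof
      fix \<omega> assume B: "\<omega> \<in> Bad"
      show "\<omega> \<in> Out \<union> N"
      proof (rule ccontr)
        assume nn: "\<omega> \<notin> Out \<union> N"
        have om: "\<omega> \<in> space M" using B unfolding Bad_def by blast
        have inK: "X \<omega> \<in> K" using nn om unfolding Out_def by blast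
        have nE: "(A, X \<omega>) \<notin> E" using N(2)[of \<omega>] nn om by blast
        have uq: "\<forall>y\<in>K. (\<forall>i. A$i \<bullet> y = A$i \<bullet> X \<omega>) \<longrightarrow> y = X \<omega>"
        proof (intro ballI impI, rule ccontr)
          fix y assume yK: "y \<in> K" and eq: "\<forall>i. A$i \<bullet> y = A$i \<bullet> X \<omega>" and ne: "y \<noteq> X \<omega>"
          have dpos: "dist y (X \<omega>) > 0" using ne by simp
          obtain n :: nat where n: "inverse (real (Suc n)) < dist y (X \<omega>)"
            using reals_Archimedean[OF dpos] by blast
          hence le: "1 / real (Suc n) \<le> dist y (X \<omega>)" by (simp add: inverse_eq_divide)
          have ex: "\<exists>y\<in>K. 1 / real (Suc n) \<le> dist y (X \<omega>) \<and> (\<forall>i. A$i \<bullet> y = A$i \<bullet> X \<omega>)"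
            using yK le eq by blast
          have "(A, X \<omega>) \<in> Eset (1 / Suc n) K" unfolding Eset_def
            using inK ex by simp
          hence "(A, X \<omega>) \<in> E" unfolding E_def by blast
          thus False using nE by contradiction
        qed
        have "g (\<chi> i. A$i \<bullet> X \<omega>) = X \<omega>" by (rule gx[OF inK uq])
        thus False using B unfolding Bad_def by blast
      qed
    qed
    have "measure M Bad \<le> measure M (Out \<union> N)"
      using Bsub Outm N(1) by (intro P.finite_measure_mono) auto
    also have "\<dots> = measure M Out" using Outm N(1) by (rule measure_Un_null_set)
    also have "Out = space M - {\<omega> \<in> space M. X \<omega> \<in> K}" unfolding Out_def by auto
    also have "measure M \<dots> = 1 - measure M {\<omega> \<in> space M. X \<omega> \<in> K}"
      by (rule P.prob_compl) measurable
    also have "\<dots> \<le> \<epsilon>" using PK by simp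
    finally show "\<exists>g :: real^'k \<Rightarrow> real^'n^'m. g \<in> borel_measurable borel \<and>
             measure M {\<omega> \<in> space M. g (\<chi> i. A $ i \<bullet> X \<omega>) \<noteq> X \<omega>} \<le> \<epsilon>"
      using gm unfolding Bad_def by blast
  qed
qed


end
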